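(* Let $\mathcal{G}\subseteq C(\mathbb{R},\mathbb{R})$ be nonempty. The following conditions are equivalent: (1) $\{\mathrm{CL}(\mathbb{R})\cap\mathcal{P}(X):X\subseteq\mathbb{R}\}\subseteq\mathcal{K}_\mathcal{G}$; (2) $\{\mathcal{A}_x:x\in\mathbb{R}\}\subseteq\mathcal{K}_\mathcal{G}$, where $\mathcal{A}_x=\{E\in\mathrm{CL}(\mathbb{R}):x\notin E\}$; (3) for every $x\in\mathbb{R}$ there exists $f\in C(\mathbb{R},\mathbb{R})$ such that $E_\mathcal{G}(\{f\})=\mathcal{A}_x$.
   Context: $\mathrm{CL}(\mathbb{R})$ is the family of closed subsets of $\mathbb{R}$ and $\mathcal{P}(X)$ the power set of $X$. For $\mathcal{G}\subseteq C(\mathbb{R},\mathbb{R})$ let $R_\mathcal{G}=\{(f,E)\in C(\mathbb{R},\mathbb{R})\times\mathrm{CL}(\mathbb{R}):(\exists g\in\mathcal{G})\, f\restriction E=g\restriction E\}$; for $\mathcal{F}\subseteq C(\mathbb{R},\mathbb{R})$ put $E_\mathcal{G}(\mathcal{F})=\{E\in\mathrm{CL}(\mathbb{R}):(\forall f\in\mathcal{F})\,(f,E)\in R_\mathcal{G}\}$, and let $\mathcal{K}_\mathcal{G}=\{E_\mathcal{G}(\mathcal{F}):\mathcal{F}\subseteq C(\mathbb{R},\mathbb{R})\}$. *)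

theory Defs
  imports "HOL-Analysis.Analysis"
begin

definition CRR :: "(real \<Rightarrow> real) set" where
  "CRR = {f. continuous_on UNIV f}"

definition CL :: "real set set" where
  "CL = {E. closed E}"

definition R_rel :: "(real \<Rightarrow> real) set \<Rightarrow> ((real \<Rightarrow> real) \<times> real set) set" where
  "R_rel G = {(f, E). f \<in> CRR \<and> E \<in> CL \<and> (\<exists>g\<in>G. \<forall>x\<in>E. f x = g x)}"

definition E_op :: "(real \<Rightarrow> real) set \<Rightarrow> (real \<Rightarrow> real) set \<Rightarrow> real set set" where
  "E_op G F = {E \<in> CL. \<forall>f\<in>F. (f, E) \<in> R_rel G}"

definition K_fam :: "(real \<Rightarrow> real) set \<Rightarrow> real set set set" where
  "K_fam G = {E_op G F | F. F \<subseteq> CRR}"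

definition A_pt :: "real \<Rightarrow> real set set" where
  "A_pt x = {E \<in> CL. x \<notin> E}"

end

theory Submission
  imports Defs
begin

lemma closed_sing_CL: "{x::real} \<in> CL" by (simp add: CL_def)

lemma A_pt_eq: "A_pt x = CL \<inter> Pow (UNIV - {x})"
  by (auto simp: A_pt_def)

lemma one_two:
  assumes "{A_pt x | x. x \<in> (UNIV :: real set)} \<subseteq> K_fam G"
  shows "{CL \<inter> Pow X | X. X \<subseteq> (UNIV :: real set)} \<subseteq> K_fam G"
proof
  fix S assume "S \<in> {CL \<inter> Pow X | X. X \<subseteq> (UNIV :: real set)}"
  then obtain X where S: "S = CL \<inter> Pow X" by blast
  have ex: "\<exists>F. F \<subseteq> CRR \<and> E_op G F = A_pt x" for x
  proof -
    have "A_pt x \<in> K_fam G" using assms by blast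
    then show ?thesis unfolding K_fam_def by blast
  qed
  define Fx where "Fx x = (SOME F. F \<subseteq> CRR \<and> E_op G F = A_pt x)" for x
  have Fx1: "Fx x \<subseteq> CRR" and Fx2: "E_op G (Fx x) = A_pt x" for x
    using someI_ex[OF ex[of x]] unfolding Fx_def by blast+
  define F where "F = (\<Union>x\<in>UNIV - X. Fx x)"
  have "F \<subseteq> CRR" using Fx1 unfolding F_def by blast
  moreover have "E_op G F = S"
  proof
    show "E_op G F \<subseteq> S"
    proof
      fix E assume E: "E \<in> E_op G F"
      have EC: "E \<in> CL" using E unfolding E_op_def by blast
      have "E \<subseteq> X"
      proof
        fix y assume y: "y \<in> E"
        show "y \<in> X"
        proof (rule ccontr)
          assume "y \<notin> X"
          then have "Fx y \<subseteq> F" unfolding F_def by blast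
          then have "E \<in> E_op G (Fx y)" using E EC unfolding E_op_def by blast
          then have "E \<in> A_pt y" using Fx2 by simp
          with y show False unfolding A_pt_def by blast
        qed
      qed
      then show "E \<in> S" using EC S by blast
    qed
    show "S \<subseteq> E_op G F"
    proof
      fix E assume E: "E \<in> S"
      then have EC: "E \<in> CL" and EX: "E \<subseteq> X" using S by blast+
      have "\<forall>f\<in>F. (f, E) \<in> R_rel G"
      proof
        fix f assume "f \<in> F"
        then obtain y where y: "y \<notin> X" "f \<in> Fx y" unfolding F_def by blast
        have "E \<in> A_pt y" using EC EX y(1) unfolding A_pt_def by blast
        then have "E \<in> E_op G (Fx y)" using Fx2 by simp
        then show "(f, E) \<in> R_rel G" using y(2) unfolding E_op_def by blast
      qed
      then show "E \<in> E_op G F" using EC unfolding E_op_def by blast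
    qed
  qed
  ultimately show "S \<in> K_fam G" unfolding K_fam_def by blast
qed

lemma two_three:
  assumes "{A_pt x | x. x \<in> (UNIV :: real set)} \<subseteq> K_fam G"
  shows "\<exists>f\<in>CRR. E_op G {f} = A_pt x"
proof -
  have "A_pt x \<in> K_fam G" using assms by blast
  then obtain F where F: "F \<subseteq> CRR" "E_op G F = A_pt x"
    unfolding K_fam_def by blast
  have "{x} \<notin> A_pt x" by (simp add: A_pt_def)
  then have "{x} \<notin> E_op G F" using F(2) by simp
  then have "\<not> (\<forall>f\<in>F. (f, {x}) \<in> R_rel G)"
    using closed_sing_CL unfolding E_op_def by blast
  then obtain f where f: "f \<in> F" "(f, {x}) \<notin> R_rel G" by blast
  have fC: "f \<in> CRR" using f(1) F(1) by blast
  have nog: "\<forall>g\<in>G. f x \<noteq> g x"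
  proof
    fix g assume g: "g \<in> G"
    show "f x \<noteq> g x"
    proof
      assume "f x = g x"
      then have "(f, {x}) \<in> R_rel G" using g fC closed_sing_CL
        unfolding R_rel_def by blast
      with f(2) show False by blast
    qed
  qed
  have "E_op G {f} = A_pt x"
  proof
    show "E_op G {f} \<subseteq> A_pt x"
    proof
      fix E assume E: "E \<in> E_op G {f}"
      then have EC: "E \<in> CL" and "(f, E) \<in> R_rel G" unfolding E_op_def by blast+
      then obtain g where g: "g \<in> G" "\<forall>y\<in>E. f y = g y" unfolding R_rel_def by blast
      have "x \<notin> E" using g nog by blast
      then show "E \<in> A_pt x" using EC unfolding A_pt_def by blast
    qed
    show "A_pt x \<subseteq> E_op G {f}"
      using F(2) f(1) unfolding E_op_def by blast
  qed
  thus ?thesis using fC by blast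
qed

theorem theorem4p2:
  fixes G :: "(real \<Rightarrow> real) set"
  assumes "G \<subseteq> CRR" and "G \<noteq> {}"
  shows "({CL \<inter> Pow X | X. X \<subseteq> (UNIV :: real set)} \<subseteq> K_fam G
           \<longleftrightarrow> {A_pt x | x. x \<in> (UNIV :: real set)} \<subseteq> K_fam G)
       \<and> ({A_pt x | x. x \<in> (UNIV :: real set)} \<subseteq> K_fam G
           \<longleftrightarrow> (\<forall>x::real. \<exists>f\<in>CRR. E_op G {f} = A_pt x))"
proof (intro conjI iffI)
  assume "{CL \<inter> Pow X | X. X \<subseteq> (UNIV :: real set)} \<subseteq> K_fam G"
  then show "{A_pt x | x. x \<in> (UNIV :: real set)} \<subseteq> K_fam G"
    unfolding A_pt_eq by blast
next
  assume "{A_pt x | x. x \<in> (UNIV :: real set)} \<subseteq> K_fam G"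
  then show "{CL \<inter> Pow X | X. X \<subseteq> (UNIV :: real set)} \<subseteq> K_fam G"
    by (rule one_two)
next
  assume "{A_pt x | x. x \<in> (UNIV :: real set)} \<subseteq> K_fam G"
  then show "\<forall>x::real. \<exists>f\<in>CRR. E_op G {f} = A_pt x"
    using two_three by blast
next
  assume h: "\<forall>x::real. \<exists>f\<in>CRR. E_op G {f} = A_pt x"
  show "{A_pt x | x. x \<in> (UNIV :: real set)} \<subseteq> K_fam G"
  proof
    fix S assume "S \<in> {A_pt x | x. x \<in> (UNIV :: real set)}"
    then obtain x where "S = A_pt x" by blast
    with h obtain f where "f \<in> CRR" "E_op G {f} = S" by blast
    then show "S \<in> K_fam G" unfolding K_fam_def by blast
  qed
qed

end
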